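(* Let $\mathcal{P}'$ be a set of pairwise edge-intersecting paths in a Helly $B_k$-EPG representation of a graph $G$. Then the intersection of all paths of $\mathcal{P}'$ contains at least one relevant edge (of some path of the representation).
   Context: A grid is the set of integer points of the plane; a grid edge joins two grid points at distance $1$. A path in the grid is a sequence of distinct grid edges in which consecutive edges share exactly one grid point and non-consecutive edges share none; a bend is a pair of consecutive edges with different directions (horizontal/vertical), these being bend edges. The first and last edges of a path are its extremity edges; relevant edges of a path are its extremity and bend edges. An EPG representation of $G$ is a family $(P_v)_{v\in V(G)}$ of grid paths such that distinct $u,v$ are adjacent iff $P_u,P_v$ share a grid edge; it is $B_k$-EPG if every path has at most $k$ bends, and Helly if every subfamily of pairwise edge-intersecting paths has a grid edge common to all its members. *)

theory Defs
  imports Main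
begin

type_synonym gpoint = "int \<times> int"
type_synonym gedge = "gpoint set"

definition grid_edge :: "gedge \<Rightarrow> bool" where
  "grid_edge e \<longleftrightarrow> (\<exists>p q. e = {p, q} \<and> \<bar>fst p - fst q\<bar> + \<bar>snd p - snd q\<bar> = 1)"

definition horizontal :: "gedge \<Rightarrow> bool" where
  "horizontal e \<longleftrightarrow> (\<exists>a b y. e = {(a, y), (b, y)} \<and> a \<noteq> b)"

definition grid_path :: "gedge list \<Rightarrow> bool" where
  "grid_path xs \<longleftrightarrow> xs \<noteq> [] \<and> distinct xs \<and> (\<forall>e\<in>set xs. grid_edge e) \<and>
     (\<forall>i. Suc i < length xs \<longrightarrow> card (xs ! i \<inter> xs ! Suc i) = 1) \<and>
     (\<forall>i j. Suc i < j \<and> j < length xs \<longrightarrow> xs ! i \<inter> xs ! j = {})"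

definition is_bend :: "gedge list \<Rightarrow> nat \<Rightarrow> bool" where
  "is_bend xs i \<longleftrightarrow> Suc i < length xs \<and> horizontal (xs ! i) \<noteq> horizontal (xs ! Suc i)"

definition num_bends :: "gedge list \<Rightarrow> nat" where
  "num_bends xs = card {i. is_bend xs i}"

definition bend_edge :: "gedge list \<Rightarrow> gedge \<Rightarrow> bool" where
  "bend_edge xs e \<longleftrightarrow> (\<exists>i. is_bend xs i \<and> (e = xs ! i \<or> e = xs ! Suc i))"

definition relevant_edge :: "gedge list \<Rightarrow> gedge \<Rightarrow> bool" where
  "relevant_edge xs e \<longleftrightarrow> e = hd xs \<or> e = last xs \<or> bend_edge xs e"

definition EPG_rep :: "'v set \<Rightarrow> ('v \<Rightarrow> 'v \<Rightarrow> bool) \<Rightarrow> ('v \<Rightarrow> gedge list) \<Rightarrow> bool" where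
  "EPG_rep V E P \<longleftrightarrow> (\<forall>v\<in>V. grid_path (P v)) \<and>
     (\<forall>u\<in>V. \<forall>v\<in>V. u \<noteq> v \<longrightarrow> (E u v \<longleftrightarrow> set (P u) \<inter> set (P v) \<noteq> {}))"

definition Bk_EPG_rep :: "nat \<Rightarrow> 'v set \<Rightarrow> ('v \<Rightarrow> 'v \<Rightarrow> bool) \<Rightarrow> ('v \<Rightarrow> gedge list) \<Rightarrow> bool" where
  "Bk_EPG_rep k V E P \<longleftrightarrow> EPG_rep V E P \<and> (\<forall>v\<in>V. num_bends (P v) \<le> k)"

definition pairwise_edge_intersecting :: "('v \<Rightarrow> gedge list) \<Rightarrow> 'v set \<Rightarrow> bool" where
  "pairwise_edge_intersecting P S \<longleftrightarrow> (\<forall>u\<in>S. \<forall>v\<in>S. set (P u) \<inter> set (P v) \<noteq> {})"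

definition Helly_rep :: "'v set \<Rightarrow> ('v \<Rightarrow> gedge list) \<Rightarrow> bool" where
  "Helly_rep V P \<longleftrightarrow> (\<forall>S\<subseteq>V. pairwise_edge_intersecting P S \<longrightarrow>
      (\<exists>e. grid_edge e \<and> (\<forall>v\<in>S. e \<in> set (P v))))"

end

theory Submission
  imports Defs
begin
definition hE :: "int \<Rightarrow> int \<Rightarrow> gedge" where "hE x y = {(x,y),(x+1,y)}"
definition vE :: "int \<Rightarrow> int \<Rightarrow> gedge" where "vE x y = {(x,y),(x,y+1)}"

lemma ge_cases: assumes "grid_edge f" shows "(\<exists>x y. f = hE x y) \<or> (\<exists>x y. f = vE x y)"
proof -
  obtain p q where f: "f = {p,q}" and d: "\<bar>fst p - fst q\<bar> + \<bar>snd p - snd q\<bar> = 1"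
    using assms unfolding grid_edge_def by blast
  obtain a b c e where pq: "p = (a,b)" "q = (c,e)" by (cases p, cases q)
  have "(c = a+1 \<and> e = b) \<or> (a = c+1 \<and> e = b) \<or> (c = a \<and> e = b+1) \<or> (c = a \<and> b = e+1)"
    using d pq by auto
  then show ?thesis
  proof (elim disjE)
    assume "c = a+1 \<and> e = b" then have "f = hE a b" unfolding f pq hE_def by auto
    then show ?thesis by blast
  next
    assume "a = c+1 \<and> e = b" then have "f = hE c b" unfolding f pq hE_def by auto
    then show ?thesis by blast
  next
    assume "c = a \<and> e = b+1" then have "f = vE a b" unfolding f pq vE_def by auto
    then show ?thesis by blast
  next
    assume "c = a \<and> b = e+1" then have "f = vE a e" unfolding f pq vE_def by auto
    then show ?thesis by blast
  qed
qed

lemma hor_h: "horizontal (hE x y)" unfolding horizontal_def hE_def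
  by (rule exI[of _ x], rule exI[of _ "x+1"]) auto
lemma hor_v: "\<not> horizontal (vE x y)" unfolding horizontal_def vE_def by (auto simp: doubleton_eq_iff)

lemma nb_h: assumes "card (hE x y \<inter> hE x' y') = 1" shows "y' = y \<and> (x' = x+1 \<or> x' = x-1)"
proof (rule ccontr)
  assume "\<not> ?thesis"
  then have "hE x y \<inter> hE x' y' = {} \<or> hE x y \<inter> hE x' y' = hE x y" unfolding hE_def by auto
  then show False using assms unfolding hE_def by auto
qed

lemma nb_v: assumes "card (vE x y \<inter> vE x' y') = 1" shows "x' = x \<and> (y' = y+1 \<or> y' = y-1)"
proof (rule ccontr)
  assume "\<not> ?thesis"
  then have "vE x y \<inter> vE x' y' = {} \<or> vE x y \<inter> vE x' y' = vE x y" unfolding vE_def by auto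
  then show False using assms unfolding vE_def by auto
qed
lemma local_h:
  assumes gp: "grid_path Q" and i: "i < length Q" and qi: "Q ! i = hE x y"
    and nr: "\<not> relevant_edge Q (hE x y)"
  shows "hE (x+1) (y) \<in> set Q"
proof -
  have ne: "Q \<noteq> []" and dist: "distinct Q" and ge: "\<forall>e\<in>set Q. grid_edge e"
    and c1: "\<forall>i. Suc i < length Q \<longrightarrow> card (Q ! i \<inter> Q ! Suc i) = 1"
    using gp unfolding grid_path_def by auto
  have hd0: "hd Q = Q ! 0" using ne by (simp add: hd_conv_nth)
  have i0: "i \<noteq> 0"
  proof
    assume "i = 0" then have "relevant_edge Q (hE x y)" using qi hd0 unfolding relevant_edge_def by simp
    then show False using nr by simp
  qed
  have lst: "last Q = Q ! (length Q - 1)" using ne by (simp add: last_conv_nth)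
  have il: "Suc i < length Q"
  proof (rule ccontr)
    assume "\<not> Suc i < length Q" then have "i = length Q - 1" using i by simp
    then have "relevant_edge Q (hE x y)" using qi lst unfolding relevant_edge_def by simp
    then show False using nr by simp
  qed
  have nb1: "\<not> is_bend Q i"
  proof
    assume "is_bend Q i" then have "bend_edge Q (Q ! i)" unfolding bend_edge_def by blast
    then show False using nr qi unfolding relevant_edge_def by simp
  qed
  have si: "Suc (i - 1) = i" using i0 by simp
  have nb2: "\<not> is_bend Q (i - 1)"
  proof
    assume "is_bend Q (i - 1)" then have "bend_edge Q (Q ! Suc (i - 1))" unfolding bend_edge_def by blast
    then show False using nr qi si unfolding relevant_edge_def by simp
  qed
  have fact: "f = hE (x+1) (y) \<or> f = hE (x-1) (y)"
    if "f \<in> set Q" "horizontal f = horizontal (hE x y)" "card (hE x y \<inter> f) = 1" for f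
  proof -
    have "grid_edge f" using that ge by auto
    then consider (h) a b where "f = hE a b" | (v) a b where "f = vE a b" using ge_cases by blast
    then show ?thesis
    proof cases
      case h
      then have "b = y \<and> (a = x+1 \<or> a = x-1)" using nb_h that(3) by simp
      then show ?thesis using h by auto
    next
      case v then show ?thesis using that(2) hor_h hor_v by simp
    qed
  qed
  have A: "Q ! Suc i = hE (x+1) (y) \<or> Q ! Suc i = hE (x-1) (y)"
  proof (rule fact)
    show "Q ! Suc i \<in> set Q" using il by simp
    show "horizontal (Q ! Suc i) = horizontal (hE x y)" using nb1 il qi unfolding is_bend_def by simp
    show "card (hE x y \<inter> Q ! Suc i) = 1" using c1[rule_format, OF il] qi by simp
  qed
  have B: "Q ! (i - 1) = hE (x+1) (y) \<or> Q ! (i - 1) = hE (x-1) (y)"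
  proof (rule fact)
    show "Q ! (i - 1) \<in> set Q" using i by simp
    have "horizontal (Q ! (i - 1)) = horizontal (Q ! Suc (i - 1))" using nb2 i si unfolding is_bend_def by simp
    then show "horizontal (Q ! (i - 1)) = horizontal (hE x y)" using qi si by simp
    have "Suc (i - 1) < length Q" using i si by simp
    then have "card (Q ! (i - 1) \<inter> Q ! Suc (i - 1)) = 1" using c1 by blast
    then show "card (hE x y \<inter> Q ! (i - 1)) = 1" using qi si by (simp add: Int_commute)
  qed
  have "Q ! Suc i \<noteq> Q ! (i - 1)" using dist il i0 by (simp add: nth_eq_iff_index_eq)
  then have "Q ! Suc i = hE (x+1) (y) \<or> Q ! (i - 1) = hE (x+1) (y)" using A B by auto
  moreover have "Q ! Suc i \<in> set Q" "Q ! (i - 1) \<in> set Q" using il i by simp_all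
  ultimately show ?thesis by auto
qed

lemma local_v:
  assumes gp: "grid_path Q" and i: "i < length Q" and qi: "Q ! i = vE x y"
    and nr: "\<not> relevant_edge Q (vE x y)"
  shows "vE (x) (y+1) \<in> set Q"
proof -
  have ne: "Q \<noteq> []" and dist: "distinct Q" and ge: "\<forall>e\<in>set Q. grid_edge e"
    and c1: "\<forall>i. Suc i < length Q \<longrightarrow> card (Q ! i \<inter> Q ! Suc i) = 1"
    using gp unfolding grid_path_def by auto
  have hd0: "hd Q = Q ! 0" using ne by (simp add: hd_conv_nth)
  have i0: "i \<noteq> 0"
  proof
    assume "i = 0" then have "relevant_edge Q (vE x y)" using qi hd0 unfolding relevant_edge_def by simp
    then show False using nr by simp
  qed
  have lst: "last Q = Q ! (length Q - 1)" using ne by (simp add: last_conv_nth)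
  have il: "Suc i < length Q"
  proof (rule ccontr)
    assume "\<not> Suc i < length Q" then have "i = length Q - 1" using i by simp
    then have "relevant_edge Q (vE x y)" using qi lst unfolding relevant_edge_def by simp
    then show False using nr by simp
  qed
  have nb1: "\<not> is_bend Q i"
  proof
    assume "is_bend Q i" then have "bend_edge Q (Q ! i)" unfolding bend_edge_def by blast
    then show False using nr qi unfolding relevant_edge_def by simp
  qed
  have si: "Suc (i - 1) = i" using i0 by simp
  have nb2: "\<not> is_bend Q (i - 1)"
  proof
    assume "is_bend Q (i - 1)" then have "bend_edge Q (Q ! Suc (i - 1))" unfolding bend_edge_def by blast
    then show False using nr qi si unfolding relevant_edge_def by simp
  qed
  have fact: "f = vE (x) (y+1) \<or> f = vE (x) (y-1)"
    if "f \<in> set Q" "horizontal f = horizontal (vE x y)" "card (vE x y \<inter> f) = 1" for f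
  proof -
    have "grid_edge f" using that ge by auto
    then consider (h) a b where "f = hE a b" | (v) a b where "f = vE a b" using ge_cases by blast
    then show ?thesis
    proof cases
      case v
      then have "a = x \<and> (b = y+1 \<or> b = y-1)" using nb_v that(3) by simp
      then show ?thesis using v by auto
    next
      case h then show ?thesis using that(2) hor_h hor_v by simp
    qed
  qed
  have A: "Q ! Suc i = vE (x) (y+1) \<or> Q ! Suc i = vE (x) (y-1)"
  proof (rule fact)
    show "Q ! Suc i \<in> set Q" using il by simp
    show "horizontal (Q ! Suc i) = horizontal (vE x y)" using nb1 il qi unfolding is_bend_def by simp
    show "card (vE x y \<inter> Q ! Suc i) = 1" using c1[rule_format, OF il] qi by simp
  qed
  have B: "Q ! (i - 1) = vE (x) (y+1) \<or> Q ! (i - 1) = vE (x) (y-1)"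
  proof (rule fact)
    show "Q ! (i - 1) \<in> set Q" using i by simp
    have "horizontal (Q ! (i - 1)) = horizontal (Q ! Suc (i - 1))" using nb2 i si unfolding is_bend_def by simp
    then show "horizontal (Q ! (i - 1)) = horizontal (vE x y)" using qi si by simp
    have "Suc (i - 1) < length Q" using i si by simp
    then have "card (Q ! (i - 1) \<inter> Q ! Suc (i - 1)) = 1" using c1 by blast
    then show "card (vE x y \<inter> Q ! (i - 1)) = 1" using qi si by (simp add: Int_commute)
  qed
  have "Q ! Suc i \<noteq> Q ! (i - 1)" using dist il i0 by (simp add: nth_eq_iff_index_eq)
  then have "Q ! Suc i = vE (x) (y+1) \<or> Q ! (i - 1) = vE (x) (y+1)" using A B by auto
  moreover have "Q ! Suc i \<in> set Q" "Q ! (i - 1) \<in> set Q" using il i by simp_all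
  ultimately show ?thesis by auto
qed

lemma hE_inj: "inj (\<lambda>n::nat. hE (x + int n) y)"
proof (rule injI)
  fix m n :: nat assume eq: "hE (x + int m) y = hE (x + int n) y"
  have "(x + int m, y) \<in> hE (x + int m) y" by (simp add: hE_def)
  then have "(x + int m, y) \<in> hE (x + int n) y" by (simp only: eq)
  moreover have "(x + int n, y) \<in> hE (x + int n) y" by (simp add: hE_def)
  then have "(x + int n, y) \<in> hE (x + int m) y" by (simp only: eq[symmetric])
  ultimately have "int m = int n + 1 \<or> m = n" "int n = int m + 1 \<or> m = n" unfolding hE_def by auto
  then show "m = n" by linarith
qed

lemma vE_inj: "inj (\<lambda>n::nat. vE x (y + int n))"
proof (rule injI)
  fix m n :: nat assume eq: "vE x (y + int m) = vE x (y + int n)"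
  have "(x, y + int m) \<in> vE x (y + int m)" by (simp add: vE_def)
  then have "(x, y + int m) \<in> vE x (y + int n)" by (simp only: eq)
  moreover have "(x, y + int n) \<in> vE x (y + int n)" by (simp add: vE_def)
  then have "(x, y + int n) \<in> vE x (y + int m)" by (simp only: eq[symmetric])
  ultimately have "int m = int n + 1 \<or> m = n" "int n = int m + 1 \<or> m = n" unfolding vE_def by auto
  then show "m = n" by linarith
qed

lemma walk:
  fixes F :: "nat \<Rightarrow> gedge" and Q :: "'v \<Rightarrow> gedge list"
  assumes inj: "inj F" and v0: "v0 \<in> S" and start: "\<forall>v\<in>S. F 0 \<in> set (Q v)"
    and step: "\<And>v n. v \<in> S \<Longrightarrow> F n \<in> set (Q v) \<Longrightarrow> \<not> relevant_edge (Q v) (F n) \<Longrightarrow> F (Suc n) \<in> set (Q v)"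
  shows "\<exists>n. (\<forall>v\<in>S. F n \<in> set (Q v)) \<and> (\<exists>v\<in>S. relevant_edge (Q v) (F n))"
proof (rule ccontr)
  assume na: "\<not> ?thesis"
  have all: "\<forall>v\<in>S. F n \<in> set (Q v)" for n
  proof (induction n)
    case 0 then show ?case using start by simp
  next
    case (Suc n) then show ?case using na step by blast
  qed
  have "range F \<subseteq> set (Q v0)" using all v0 by auto
  then have "finite (range F)" using finite_subset by blast
  then have "finite (UNIV :: nat set)" using finite_imageD inj by blast
  then show False by simp
qed

theorem corollary3p1:
  fixes V :: "'v set" and E :: "'v \<Rightarrow> 'v \<Rightarrow> bool" and P :: "'v \<Rightarrow> gedge list" and k :: nat
    and S :: "'v set"
  assumes "finite V"
    and "Bk_EPG_rep k V E P"
    and "Helly_rep V P"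
    and "S \<subseteq> V" and "S \<noteq> {}"
    and "pairwise_edge_intersecting P S"
  shows "\<exists>e. (\<forall>v\<in>S. e \<in> set (P v)) \<and> (\<exists>w\<in>V. relevant_edge (P w) e)"
proof -
  obtain e where ge: "grid_edge e" and ce: "\<forall>v\<in>S. e \<in> set (P v)"
    using assms(3,4,6) unfolding Helly_rep_def by blast
  obtain v0 where v0: "v0 \<in> S" using assms(5) by blast
  have gp: "\<And>v. v \<in> S \<Longrightarrow> grid_path (P v)"
    using assms(2,4) unfolding Bk_EPG_rep_def EPG_rep_def by blast
  from ge_cases[OF ge] show ?thesis
  proof (elim disjE exE)
    fix x y assume e: "e = hE x y"
    have "\<exists>n. (\<forall>v\<in>S. hE (x + int n) y \<in> set (P v)) \<and> (\<exists>v\<in>S. relevant_edge (P v) (hE (x + int n) y))"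
    proof (rule walk[OF hE_inj v0])
      show "\<forall>v\<in>S. hE (x + int 0) y \<in> set (P v)" using ce e by simp
    next
      fix v n assume "v \<in> S" "hE (x + int n) y \<in> set (P v)" "\<not> relevant_edge (P v) (hE (x + int n) y)"
      then obtain j where "j < length (P v)" "P v ! j = hE (x + int n) y" by (auto simp: in_set_conv_nth)
      then have "hE (x + int n + 1) y \<in> set (P v)" using local_h[OF gp] \<open>v \<in> S\<close> \<open>\<not> relevant_edge _ _\<close> by blast
      then show "hE (x + int (Suc n)) y \<in> set (P v)" by (simp add: algebra_simps)
    qed
    then show ?thesis using assms(4) by blast
  next
    fix x y assume e: "e = vE x y"
    have "\<exists>n. (\<forall>v\<in>S. vE x (y + int n) \<in> set (P v)) \<and> (\<exists>v\<in>S. relevant_edge (P v) (vE x (y + int n)))"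
    proof (rule walk[OF vE_inj v0])
      show "\<forall>v\<in>S. vE x (y + int 0) \<in> set (P v)" using ce e by simp
    next
      fix v n assume "v \<in> S" "vE x (y + int n) \<in> set (P v)" "\<not> relevant_edge (P v) (vE x (y + int n))"
      then obtain j where "j < length (P v)" "P v ! j = vE x (y + int n)" by (auto simp: in_set_conv_nth)
      then have "vE x (y + int n + 1) \<in> set (P v)" using local_v[OF gp] \<open>v \<in> S\<close> \<open>\<not> relevant_edge _ _\<close> by blast
      then show "vE x (y + int (Suc n)) \<in> set (P v)" by (simp add: algebra_simps)
    qed
    then show ?thesis using assms(4) by blast
  qed
qed

end
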